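(* For every context $\Gamma$, variables $x,y$ and terms $A,M,B$: if $y\notin\mathrm{dom}\,\Gamma$ and $\Gamma,x:A\vdash M:B$, then $\Gamma,y:A\vdash M[x:=v\,y]:B[x:=v\,y]$.
   Context: Let $\mathcal V$ (the variables) be a type with decidable equality, equipped with functions $\mathrm{encode}:\mathcal V\to\mathbb N$ and $\mathrm{decode}:\mathbb N\to\mathcal V$ such that $\mathrm{encode}(\mathrm{decode}\,n)=n$ for all $n$. Let $\mathcal C$ (the constants) be any type. Terms $\Lambda$ are generated by: $c\,k$ ($k\in\mathcal C$), $v\,x$ ($x\in\mathcal V$), $\lambda[x:A]M$, $\Pi[x:A]B$ and $M\cdot N$; in $\lambda[x:A]M$ and $\Pi[x:A]B$ the name $x$ binds in $M$ (resp. $B$) but not in $A$. Terms are raw first-order syntax (not identified up to renaming of bound variables) and $\equiv$ denotes syntactic identity. The list of free variables is $\mathrm{fv}(c\,k)=[\,]$, $\mathrm{fv}(v\,x)=[x]$, $\mathrm{fv}(\lambda[x:A]M)=\mathrm{fv}\,A\mathbin{+\!\!+}(\mathrm{fv}\,M-x)$, $\mathrm{fv}(\Pi[x:A]B)=\mathrm{fv}\,A\mathbin{+\!\!+}(\mathrm{fv}\,B-x)$, $\mathrm{fv}(M\cdot N)=\mathrm{fv}\,M\mathbin{+\!\!+}\mathrm{fv}\,N$, where $\mathbin{+\!\!+}$ is list concatenation and $xs-x$ deletes every occurrence of $x$ from $xs$. Fix a function $\chi':\mathrm{List}\,\mathbb N\to\mathbb N$ with $\chi'(ns)\notin ns$ for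 every list $ns$, and put $X'(xs)=\mathrm{decode}(\chi'(\mathrm{map}\ \mathrm{encode}\ xs))$. A substitution is any function $\sigma:\mathcal V\to\Lambda$; $\iota=v$ is the identity substitution; $(\sigma,x:=N)(y)=N$ if $y=x$ and $\sigma\,y$ otherwise. For a substitution $\sigma$ and a list $xs$ of variables, $X(\sigma,xs)=X'(\text{concatenation of the lists }\mathrm{fv}(\sigma\,y)\text{ for }y\in xs)$. The action $M\bullet\sigma$ is defined by structural recursion: $c\,k\bullet\sigma=c\,k$; $v\,x\bullet\sigma=\sigma\,x$; $(M\cdot N)\bullet\sigma=(M\bullet\sigma)\cdot(N\bullet\sigma)$; $(\lambda[x:A]M)\bullet\sigma=\lambda[y:A\bullet\sigma](M\bullet(\sigma,x:=v\,y))$ with $y=X(\sigma,\mathrm{fv}\,M-x)$; $(\Pi[x:A]B)\bullet\sigma=\Pi[y:A\bullet\sigma](B\bullet(\sigma,x:=v\,y))$ with $y=X(\sigma,\mathrm{fv}\,B-x)$. Unary substitution is $M[x:=N]=M\bullet(\iota,x:=N)$. $\alpha$-conversion $\sim_\alpha$ is the inductively defined relation with rules: $c\,k\sim_\alpha c\,k$; $v\,x\sim_\alpha v\,x$; $M\cdot N\sim_\alpha M'\cdot N'$ if $M\sim_\alpha M'$ and $N\sim_\alpha N'$; $\lambda[x:A]M\sim_\alpha\lambda[x':A']M'$ if $A\sim_\alpha A'$ and there is a variable $y$ with $y\notin\mathrm{fv}\,M-x$, $y\notin\mathrm{fv}\,M'-x'$ and $M[x:=v\,y]\equiv M'[x':=v\,y]$;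 and the same rule with $\Pi$ in place of $\lambda$. $\beta$-contraction is $(\lambda[x:A]M)\cdot N\ \triangleright_\beta\ M[x:=N]$. One-step $\beta$-reduction $\to_\beta$ is its contextual closure, inductively: $M\to_\beta N$ if $M\triangleright_\beta N$; $\lambda[x:A]M\to_\beta\lambda[x:A]M'$ and $\Pi[x:A]M\to_\beta\Pi[x:A]M'$ if $M\to_\beta M'$; $\lambda[x:A]M\to_\beta\lambda[x:A']M$ and $\Pi[x:A]M\to_\beta\Pi[x:A']M$ if $A\to_\beta A'$; $M\cdot P\to_\beta N\cdot P$ and $P\cdot M\to_\beta P\cdot N$ if $M\to_\beta N$. $\beta$-conversion $\simeq_\beta$ is the equivalence (reflexive–symmetric–transitive) closure of $\sim_\alpha\cup\to_\beta$. Pure Type System: fix a binary relation $\mathcal A\subseteq\mathcal C\times\mathcal C$ (axioms) and a ternary relation $\mathcal R\subseteq\mathcal C\times\mathcal C\times\mathcal C$ (rules). A context is a finite list of pairs $(x,A)$ with $x\in\mathcal V$, $A\in\Lambda$; $\Gamma,x:A$ denotes the list $(x,A)::\Gamma$; $\mathrm{dom}\,\Gamma$ is the list of first components; $(x,A)\in\Gamma$ is list membership. The judgments $\Gamma\ \mathrm{ok}$ and $\Gamma\vdash M:A$ are defined mutually inductively by: (nil) $[\,]\ \mathrm{ok}$; (cons) if $\Gamma\ \mathrm{ok}$, $\Gamma\vdash A:c\,s$ and $x\notin\mathrm{dom}\,\Gamma$ then $\Gamma,x:A\ \mathrm{ok}$; (sort) if $\Gamma\ \mathrm{ok}$ and $\mathcal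 A\,s_1\,s_2$ then $\Gamma\vdash c\,s_1:c\,s_2$; (var) if $\Gamma\ \mathrm{ok}$ and $(x,A)\in\Gamma$ then $\Gamma\vdash v\,x:A$; (prod) if $\mathcal R\,s_1\,s_2\,s_3$, $\Gamma\vdash A:c\,s_1$ and for every $y\notin\mathrm{dom}\,\Gamma$, $\Gamma,y:A\vdash B[x:=v\,y]:c\,s_2$, then $\Gamma\vdash\Pi[x:A]B:c\,s_3$; (abs) if $\mathcal R\,s_1\,s_2\,s_3$, $\Gamma\vdash A:c\,s_1$, for every $z\notin\mathrm{dom}\,\Gamma$, $\Gamma,z:A\vdash B[y:=v\,z]:c\,s_2$, and for every $z\notin\mathrm{dom}\,\Gamma$, $\Gamma,z:A\vdash M[x:=v\,z]:B[y:=v\,z]$, then $\Gamma\vdash\lambda[x:A]M:\Pi[y:A]B$; (app) if $\Gamma\vdash M:\Pi[x:A]B$, $\Gamma\vdash N:A$ and $\Gamma\vdash B[x:=N]:c\,s$ for some $s$, then $\Gamma\vdash M\cdot N:B[x:=N]$; (conv) if $\Gamma\vdash M:A$, $A\simeq_\beta B$ and $\Gamma\vdash B:c\,s$ for some $s$, then $\Gamma\vdash M:B$. (The premises quantified over all fresh names in (prod) and (abs) are infinitely branching.) *)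

theory Defs
  imports Main
begin

text \<open>Raw first-order terms: constants of type 'c, variables of type 'v.
  Lam x A M and Pi x A B bind x in M (resp. B) but not in A.\<close>
datatype ('c, 'v) trm =
    Const 'c
  | Var 'v
  | Lam 'v "('c, 'v) trm" "('c, 'v) trm"
  | Pi 'v "('c, 'v) trm" "('c, 'v) trm"
  | App "('c, 'v) trm" "('c, 'v) trm"

primrec fv :: "('c, 'v) trm \<Rightarrow> 'v list" where
  "fv (Const k) = []"
| "fv (Var x) = [x]"
| "fv (Lam x A M) = fv A @ removeAll x (fv M)"
| "fv (Pi x A B) = fv A @ removeAll x (fv B)"
| "fv (App M N) = fv M @ fv N"

definition var_setup :: "('v \<Rightarrow> nat) \<Rightarrow> (nat \<Rightarrow> 'v) \<Rightarrow> (nat list \<Rightarrow> nat) \<Rightarrow> bool" where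
  "var_setup enc dec chi \<longleftrightarrow> (\<forall>n. enc (dec n) = n) \<and> (\<forall>ns. chi ns \<notin> set ns)"

definition Xfresh' :: "('v \<Rightarrow> nat) \<Rightarrow> (nat \<Rightarrow> 'v) \<Rightarrow> (nat list \<Rightarrow> nat) \<Rightarrow> 'v list \<Rightarrow> 'v" where
  "Xfresh' enc dec chi xs = dec (chi (map enc xs))"

definition Xfresh :: "('v \<Rightarrow> nat) \<Rightarrow> (nat \<Rightarrow> 'v) \<Rightarrow> (nat list \<Rightarrow> nat)
    \<Rightarrow> ('v \<Rightarrow> ('c, 'v) trm) \<Rightarrow> 'v list \<Rightarrow> 'v" where
  "Xfresh enc dec chi \<sigma> xs = Xfresh' enc dec chi (concat (map (\<lambda>y. fv (\<sigma> y)) xs))"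

primrec subst :: "('v \<Rightarrow> nat) \<Rightarrow> (nat \<Rightarrow> 'v) \<Rightarrow> (nat list \<Rightarrow> nat)
    \<Rightarrow> ('c, 'v) trm \<Rightarrow> ('v \<Rightarrow> ('c, 'v) trm) \<Rightarrow> ('c, 'v) trm" where
  "subst enc dec chi (Const k) \<sigma> = Const k"
| "subst enc dec chi (Var x) \<sigma> = \<sigma> x"
| "subst enc dec chi (App M N) \<sigma> = App (subst enc dec chi M \<sigma>) (subst enc dec chi N \<sigma>)"
| "subst enc dec chi (Lam x A M) \<sigma> =
     (let y = Xfresh enc dec chi \<sigma> (removeAll x (fv M))
      in Lam y (subst enc dec chi A \<sigma>) (subst enc dec chi M (\<sigma>(x := Var y))))"
| "subst enc dec chi (Pi x A B) \<sigma> =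
     (let y = Xfresh enc dec chi \<sigma> (removeAll x (fv B))
      in Pi y (subst enc dec chi A \<sigma>) (subst enc dec chi B (\<sigma>(x := Var y))))"

definition usubst :: "('v \<Rightarrow> nat) \<Rightarrow> (nat \<Rightarrow> 'v) \<Rightarrow> (nat list \<Rightarrow> nat)
    \<Rightarrow> ('c, 'v) trm \<Rightarrow> 'v \<Rightarrow> ('c, 'v) trm \<Rightarrow> ('c, 'v) trm" where
  "usubst enc dec chi M x N = subst enc dec chi M (Var(x := N))"

inductive alpha :: "('v \<Rightarrow> nat) \<Rightarrow> (nat \<Rightarrow> 'v) \<Rightarrow> (nat list \<Rightarrow> nat)
    \<Rightarrow> ('c, 'v) trm \<Rightarrow> ('c, 'v) trm \<Rightarrow> bool"
  for enc dec chi where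
  alpha_const: "alpha enc dec chi (Const k) (Const k)"
| alpha_var: "alpha enc dec chi (Var x) (Var x)"
| alpha_app: "alpha enc dec chi M M' \<Longrightarrow> alpha enc dec chi N N'
    \<Longrightarrow> alpha enc dec chi (App M N) (App M' N')"
| alpha_lam: "alpha enc dec chi A A' \<Longrightarrow> y \<notin> set (removeAll x (fv M))
    \<Longrightarrow> y \<notin> set (removeAll x' (fv M'))
    \<Longrightarrow> usubst enc dec chi M x (Var y) = usubst enc dec chi M' x' (Var y)
    \<Longrightarrow> alpha enc dec chi (Lam x A M) (Lam x' A' M')"
| alpha_pi: "alpha enc dec chi A A' \<Longrightarrow> y \<notin> set (removeAll x (fv M))
    \<Longrightarrow> y \<notin> set (removeAll x' (fv M'))
    \<Longrightarrow> usubst enc dec chi M x (Var y) = usubst enc dec chi M' x' (Var y)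
    \<Longrightarrow> alpha enc dec chi (Pi x A M) (Pi x' A' M')"

inductive beta :: "('v \<Rightarrow> nat) \<Rightarrow> (nat \<Rightarrow> 'v) \<Rightarrow> (nat list \<Rightarrow> nat)
    \<Rightarrow> ('c, 'v) trm \<Rightarrow> ('c, 'v) trm \<Rightarrow> bool"
  for enc dec chi where
  beta_contr: "beta enc dec chi (App (Lam x A M) N) (usubst enc dec chi M x N)"
| beta_lam_body: "beta enc dec chi M M' \<Longrightarrow> beta enc dec chi (Lam x A M) (Lam x A M')"
| beta_pi_body: "beta enc dec chi M M' \<Longrightarrow> beta enc dec chi (Pi x A M) (Pi x A M')"
| beta_lam_dom: "beta enc dec chi A A' \<Longrightarrow> beta enc dec chi (Lam x A M) (Lam x A' M)"
| beta_pi_dom: "beta enc dec chi A A' \<Longrightarrow> beta enc dec chi (Pi x A M) (Pi x A' M)"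
| beta_app_l: "beta enc dec chi M N \<Longrightarrow> beta enc dec chi (App M P) (App N P)"
| beta_app_r: "beta enc dec chi M N \<Longrightarrow> beta enc dec chi (App P M) (App P N)"

definition betaconv :: "('v \<Rightarrow> nat) \<Rightarrow> (nat \<Rightarrow> 'v) \<Rightarrow> (nat list \<Rightarrow> nat)
    \<Rightarrow> ('c, 'v) trm \<Rightarrow> ('c, 'v) trm \<Rightarrow> bool" where
  "betaconv enc dec chi = (\<lambda>M N. alpha enc dec chi M N \<or> beta enc dec chi M N
                                 \<or> alpha enc dec chi N M \<or> beta enc dec chi N M)\<^sup>*\<^sup>*"

type_synonym ('c, 'v) ctx = "('v \<times> ('c, 'v) trm) list"

text \<open>Pure Type System with axioms Ax and rules Rl. Gamma, x:A is (x, A) # Gamma.\<close>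
inductive ctx_ok :: "('v \<Rightarrow> nat) \<Rightarrow> (nat \<Rightarrow> 'v) \<Rightarrow> (nat list \<Rightarrow> nat)
    \<Rightarrow> ('c \<Rightarrow> 'c \<Rightarrow> bool) \<Rightarrow> ('c \<Rightarrow> 'c \<Rightarrow> 'c \<Rightarrow> bool) \<Rightarrow> ('c, 'v) ctx \<Rightarrow> bool"
  and typing :: "('v \<Rightarrow> nat) \<Rightarrow> (nat \<Rightarrow> 'v) \<Rightarrow> (nat list \<Rightarrow> nat)
    \<Rightarrow> ('c \<Rightarrow> 'c \<Rightarrow> bool) \<Rightarrow> ('c \<Rightarrow> 'c \<Rightarrow> 'c \<Rightarrow> bool) \<Rightarrow> ('c, 'v) ctx
    \<Rightarrow> ('c, 'v) trm \<Rightarrow> ('c, 'v) trm \<Rightarrow> bool"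
  for enc dec chi Ax Rl where
  ok_nil: "ctx_ok enc dec chi Ax Rl []"
| ok_cons: "ctx_ok enc dec chi Ax Rl \<Gamma> \<Longrightarrow> typing enc dec chi Ax Rl \<Gamma> A (Const s)
    \<Longrightarrow> x \<notin> set (map fst \<Gamma>) \<Longrightarrow> ctx_ok enc dec chi Ax Rl ((x, A) # \<Gamma>)"
| ty_sort: "ctx_ok enc dec chi Ax Rl \<Gamma> \<Longrightarrow> Ax s1 s2
    \<Longrightarrow> typing enc dec chi Ax Rl \<Gamma> (Const s1) (Const s2)"
| ty_var: "ctx_ok enc dec chi Ax Rl \<Gamma> \<Longrightarrow> (x, A) \<in> set \<Gamma>
    \<Longrightarrow> typing enc dec chi Ax Rl \<Gamma> (Var x) A"
| ty_prod: "Rl s1 s2 s3 \<Longrightarrow> typing enc dec chi Ax Rl \<Gamma> A (Const s1)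
    \<Longrightarrow> (\<forall>y. y \<notin> set (map fst \<Gamma>) \<longrightarrow>
          typing enc dec chi Ax Rl ((y, A) # \<Gamma>) (usubst enc dec chi B x (Var y)) (Const s2))
    \<Longrightarrow> typing enc dec chi Ax Rl \<Gamma> (Pi x A B) (Const s3)"
| ty_abs: "Rl s1 s2 s3 \<Longrightarrow> typing enc dec chi Ax Rl \<Gamma> A (Const s1)
    \<Longrightarrow> (\<forall>z. z \<notin> set (map fst \<Gamma>) \<longrightarrow>
          typing enc dec chi Ax Rl ((z, A) # \<Gamma>) (usubst enc dec chi B y (Var z)) (Const s2))
    \<Longrightarrow> (\<forall>z. z \<notin> set (map fst \<Gamma>) \<longrightarrow>
          typing enc dec chi Ax Rl ((z, A) # \<Gamma>) (usubst enc dec chi M x (Var z))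
             (usubst enc dec chi B y (Var z)))
    \<Longrightarrow> typing enc dec chi Ax Rl \<Gamma> (Lam x A M) (Pi y A B)"
| ty_app: "typing enc dec chi Ax Rl \<Gamma> M (Pi x A B) \<Longrightarrow> typing enc dec chi Ax Rl \<Gamma> N A
    \<Longrightarrow> typing enc dec chi Ax Rl \<Gamma> (usubst enc dec chi B x N) (Const s)
    \<Longrightarrow> typing enc dec chi Ax Rl \<Gamma> (App M N) (usubst enc dec chi B x N)"
| ty_conv: "typing enc dec chi Ax Rl \<Gamma> M A \<Longrightarrow> betaconv enc dec chi A B
    \<Longrightarrow> typing enc dec chi Ax Rl \<Gamma> B (Const s)
    \<Longrightarrow> typing enc dec chi Ax Rl \<Gamma> M B"

end

theory Submission
  imports Defs
begin


locale vs =
  fixes enc :: "'v \<Rightarrow> nat" and dec :: "nat \<Rightarrow> 'v" and chi :: "nat list \<Rightarrow> nat"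
  assumes vs: "var_setup enc dec chi"
begin

lemma fresh_X: "Xfresh enc dec chi \<sigma> xs \<notin> set (concat (map (\<lambda>y. fv (\<sigma> y)) xs))"
proof
  let ?L = "concat (map (\<lambda>y. fv (\<sigma> y)) xs)"
  assume "Xfresh enc dec chi \<sigma> xs \<in> set ?L"
  hence "dec (chi (map enc ?L)) \<in> set ?L" by (simp add: Xfresh_def Xfresh'_def)
  hence "enc (dec (chi (map enc ?L))) \<in> set (map enc ?L)" by auto
  hence h: "chi (map enc ?L) \<in> set (map enc ?L)" using vs by (simp only: var_setup_def)
  from vs have "\<forall>ns. chi ns \<notin> set ns" by (simp add: var_setup_def)
  thus False using h by blast
qed

lemma ex_fresh: "\<exists>z. z \<notin> set (xs :: 'v list)"
proof -
  have "concat (map (\<lambda>y. fv ((Var :: 'v \<Rightarrow> ('c,'v) trm) y)) xs) = xs" by (induction xs) auto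
  thus ?thesis using fresh_X[of "Var :: 'v \<Rightarrow> ('c,'v) trm" xs] by metis
qed

lemma fresh_ren: "\<forall>u\<in>set xs. f u \<noteq> Xfresh enc dec chi (Var \<circ> f) xs"
proof -
  have "concat (map (\<lambda>y. fv ((Var \<circ> f) y)) xs) = map f xs" by (induction xs) auto
  thus ?thesis using fresh_X[of "Var \<circ> f" xs] by (metis list.set_map image_eqI)
qed

end

lemma subst_agree: "(\<forall>u\<in>set (fv M). \<sigma> u = \<tau> u) \<Longrightarrow> subst enc dec chi M \<sigma> = subst enc dec chi M \<tau>"
proof (induction M arbitrary: \<sigma> \<tau>)
  case (Lam x A M)
  have m: "map (\<lambda>y. fv (\<sigma> y)) (removeAll x (fv M)) = map (\<lambda>y. fv (\<tau> y)) (removeAll x (fv M))"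
    using Lam.prems by (intro map_cong) auto
  show ?case using Lam by (simp add: Let_def Xfresh_def m)
next
  case (Pi x A M)
  have m: "map (\<lambda>y. fv (\<sigma> y)) (removeAll x (fv M)) = map (\<lambda>y. fv (\<tau> y)) (removeAll x (fv M))"
    using Pi.prems by (intro map_cong) auto
  show ?case using Pi by (simp add: Let_def Xfresh_def m)
qed auto

context vs begin

lemma rm_concat: "y \<notin> set (concat (map (\<lambda>u. fv (\<sigma> u)) (removeAll x L))) \<Longrightarrow>
  removeAll y (concat (map (\<lambda>u. fv ((\<sigma>(x:=Var y)) u)) L)) = concat (map (\<lambda>u. fv (\<sigma> u)) (removeAll x L))"
  by (induction L) auto

lemma fv_subst: "fv (subst enc dec chi M \<sigma>) = concat (map (\<lambda>u. fv (\<sigma> u)) (fv M))"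
proof (induction M arbitrary: \<sigma>)
  case (Lam x A M)
  show ?case using Lam rm_concat[OF fresh_X[of \<sigma> "removeAll x (fv M)"]] by (simp add: Let_def)
next
  case (Pi x A M)
  show ?case using Pi rm_concat[OF fresh_X[of \<sigma> "removeAll x (fv M)"]] by (simp add: Let_def)
qed auto

lemma concat_fv_comp: "concat (map (\<lambda>y. fv (\<tau> y)) (concat (map (\<lambda>u. fv (\<sigma> u)) L)))
   = concat (map (\<lambda>y. fv (subst enc dec chi (\<sigma> y) \<tau>)) L)"
  by (induction L) (auto simp: fv_subst)

lemma subst_comp: "subst enc dec chi (subst enc dec chi M \<sigma>) \<tau> = subst enc dec chi M (\<lambda>u. subst enc dec chi (\<sigma> u) \<tau>)"
proof (induction M arbitrary: \<sigma> \<tau>)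
  case (Lam x A M)
  define x1 where "x1 = Xfresh enc dec chi \<sigma> (removeAll x (fv M))"
  define x2 where "x2 = Xfresh enc dec chi \<tau> (removeAll x1 (fv (subst enc dec chi M (\<sigma>(x:=Var x1)))))"
  define x3 where "x3 = Xfresh enc dec chi (\<lambda>u. subst enc dec chi (\<sigma> u) \<tau>) (removeAll x (fv M))"
  have f1: "x1 \<notin> set (concat (map (\<lambda>u. fv (\<sigma> u)) (removeAll x (fv M))))" using fresh_X x1_def by metis
  have r: "removeAll x1 (fv (subst enc dec chi M (\<sigma>(x:=Var x1)))) = concat (map (\<lambda>u. fv (\<sigma> u)) (removeAll x (fv M)))"
    unfolding fv_subst by (rule rm_concat[OF f1])
  have x23: "x2 = x3" unfolding x2_def x3_def r Xfresh_def concat_fv_comp ..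
  have e1: "subst enc dec chi (Lam x A M) \<sigma> = Lam x1 (subst enc dec chi A \<sigma>) (subst enc dec chi M (\<sigma>(x:=Var x1)))"
    by (simp add: x1_def Let_def)
  have e2: "subst enc dec chi (Lam x1 (subst enc dec chi A \<sigma>) (subst enc dec chi M (\<sigma>(x:=Var x1)))) \<tau>
     = Lam x2 (subst enc dec chi (subst enc dec chi A \<sigma>) \<tau>) (subst enc dec chi (subst enc dec chi M (\<sigma>(x:=Var x1))) (\<tau>(x1:=Var x2)))"
    by (simp add: x2_def Let_def)
  have e3: "subst enc dec chi (Lam x A M) (\<lambda>u. subst enc dec chi (\<sigma> u) \<tau>) = Lam x3 (subst enc dec chi A (\<lambda>u. subst enc dec chi (\<sigma> u) \<tau>)) (subst enc dec chi M ((\<lambda>u. subst enc dec chi (\<sigma> u) \<tau>)(x:=Var x3)))"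
    by (simp add: x3_def Let_def)
  have b: "subst enc dec chi M (\<lambda>u. subst enc dec chi ((\<sigma>(x:=Var x1)) u) (\<tau>(x1:=Var x2)))
     = subst enc dec chi M ((\<lambda>u. subst enc dec chi (\<sigma> u) \<tau>)(x:=Var x3))"
  proof (rule subst_agree, intro ballI)
    fix u assume u: "u \<in> set (fv M)"
    show "subst enc dec chi ((\<sigma>(x:=Var x1)) u) (\<tau>(x1:=Var x2)) = ((\<lambda>u. subst enc dec chi (\<sigma> u) \<tau>)(x:=Var x3)) u"
    proof (cases "u = x")
      case False
      hence "x1 \<notin> set (fv (\<sigma> u))" using f1 u by auto
      hence "subst enc dec chi (\<sigma> u) (\<tau>(x1:=Var x2)) = subst enc dec chi (\<sigma> u) \<tau>"
        by (intro subst_agree) auto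
      thus ?thesis using False by simp
    qed (simp add: x23)
  qed
  show ?case using b by (simp only: e1 e2 e3 Lam.IH x23)
next
  case (Pi x A M)
  define x1 where "x1 = Xfresh enc dec chi \<sigma> (removeAll x (fv M))"
  define x2 where "x2 = Xfresh enc dec chi \<tau> (removeAll x1 (fv (subst enc dec chi M (\<sigma>(x:=Var x1)))))"
  define x3 where "x3 = Xfresh enc dec chi (\<lambda>u. subst enc dec chi (\<sigma> u) \<tau>) (removeAll x (fv M))"
  have f1: "x1 \<notin> set (concat (map (\<lambda>u. fv (\<sigma> u)) (removeAll x (fv M))))" using fresh_X x1_def by metis
  have r: "removeAll x1 (fv (subst enc dec chi M (\<sigma>(x:=Var x1)))) = concat (map (\<lambda>u. fv (\<sigma> u)) (removeAll x (fv M)))"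
    unfolding fv_subst by (rule rm_concat[OF f1])
  have x23: "x2 = x3" unfolding x2_def x3_def r Xfresh_def concat_fv_comp ..
  have e1: "subst enc dec chi (Pi x A M) \<sigma> = Pi x1 (subst enc dec chi A \<sigma>) (subst enc dec chi M (\<sigma>(x:=Var x1)))"
    by (simp add: x1_def Let_def)
  have e2: "subst enc dec chi (Pi x1 (subst enc dec chi A \<sigma>) (subst enc dec chi M (\<sigma>(x:=Var x1)))) \<tau>
     = Pi x2 (subst enc dec chi (subst enc dec chi A \<sigma>) \<tau>) (subst enc dec chi (subst enc dec chi M (\<sigma>(x:=Var x1))) (\<tau>(x1:=Var x2)))"
    by (simp add: x2_def Let_def)
  have e3: "subst enc dec chi (Pi x A M) (\<lambda>u. subst enc dec chi (\<sigma> u) \<tau>) = Pi x3 (subst enc dec chi A (\<lambda>u. subst enc dec chi (\<sigma> u) \<tau>)) (subst enc dec chi M ((\<lambda>u. subst enc dec chi (\<sigma> u) \<tau>)(x:=Var x3)))"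
    by (simp add: x3_def Let_def)
  have b: "subst enc dec chi M (\<lambda>u. subst enc dec chi ((\<sigma>(x:=Var x1)) u) (\<tau>(x1:=Var x2)))
     = subst enc dec chi M ((\<lambda>u. subst enc dec chi (\<sigma> u) \<tau>)(x:=Var x3))"
  proof (rule subst_agree, intro ballI)
    fix u assume u: "u \<in> set (fv M)"
    show "subst enc dec chi ((\<sigma>(x:=Var x1)) u) (\<tau>(x1:=Var x2)) = ((\<lambda>u. subst enc dec chi (\<sigma> u) \<tau>)(x:=Var x3)) u"
    proof (cases "u = x")
      case False
      hence "x1 \<notin> set (fv (\<sigma> u))" using f1 u by auto
      hence "subst enc dec chi (\<sigma> u) (\<tau>(x1:=Var x2)) = subst enc dec chi (\<sigma> u) \<tau>"
        by (intro subst_agree) auto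
      thus ?thesis using False by simp
    qed (simp add: x23)
  qed
  show ?case using b by (simp only: e1 e2 e3 Pi.IH x23)
qed auto

end


context vs begin

abbreviation sb where "sb \<equiv> subst enc dec chi"
abbreviation us where "us \<equiv> usubst enc dec chi"
abbreviation al where "al \<equiv> alpha enc dec chi"
abbreviation bt where "bt \<equiv> beta enc dec chi"
abbreviation bc where "bc \<equiv> betaconv enc dec chi"
abbreviation XF where "XF \<equiv> Xfresh enc dec chi"

lemma subst_usubst: "sb (us B x N) \<sigma> = sb B (\<sigma>(x := sb N \<sigma>))"
  unfolding usubst_def subst_comp by (rule subst_agree) auto

lemma subst_rename: "y \<notin> set (removeAll x (fv M)) \<Longrightarrow> sb (us M x (Var y)) (\<sigma>(y:=P)) = sb M (\<sigma>(x:=P))"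
  unfolding usubst_def subst_comp by (rule subst_agree) auto

lemma ren_gen: "(\<forall>u\<in>set (removeAll x (fv B)). f u \<noteq> x') \<Longrightarrow>
   us (sb B ((Var\<circ>f)(x:=Var x'))) x' N = sb B ((Var\<circ>f)(x:=N))"
  unfolding usubst_def subst_comp by (rule subst_agree) auto

lemma alpha_refl: "al M M"
proof (induction M)
  case (Lam x A M)
  obtain y where "y \<notin> set (fv M)" using ex_fresh by blast
  thus ?case by (intro alpha_lam[OF Lam.IH(1), of y]) auto
next
  case (Pi x A M)
  obtain y where "y \<notin> set (fv M)" using ex_fresh by blast
  thus ?case by (intro alpha_pi[OF Pi.IH(1), of y]) auto
qed (auto intro: alpha.intros)

lemma fv_ren: "y \<notin> set (removeAll x L) \<Longrightarrow>
   removeAll y (concat (map (\<lambda>u. fv ((Var(x:=Var y)) u)) L)) = removeAll x L"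
  by (induction L) auto

lemma fv_us_rm: "y \<notin> set (removeAll x (fv M)) \<Longrightarrow> removeAll y (fv (us M x (Var y))) = removeAll x (fv M)"
  unfolding usubst_def fv_subst by (rule fv_ren)

lemma alpha_subst: "al M N \<Longrightarrow> sb M \<sigma> = sb N \<sigma>"
proof (induction arbitrary: \<sigma> rule: alpha.induct)
  case (alpha_lam A A' y x M x' M')
  have r: "removeAll x (fv M) = removeAll x' (fv M')"
    using fv_us_rm[OF alpha_lam(2)] fv_us_rm[OF alpha_lam(3)] alpha_lam(4) by metis
  define x1 where "x1 = XF \<sigma> (removeAll x (fv M))"
  have "sb M (\<sigma>(x:=Var x1)) = sb (us M x (Var y)) (\<sigma>(y:=Var x1))"
    using subst_rename[OF alpha_lam(2)] by simp
  also have "\<dots> = sb M' (\<sigma>(x':=Var x1))"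
    using subst_rename[OF alpha_lam(3)] alpha_lam(4) by simp
  finally show ?case using alpha_lam.IH r by (simp add: Let_def x1_def)
next
  case (alpha_pi A A' y x M x' M')
  have r: "removeAll x (fv M) = removeAll x' (fv M')"
    using fv_us_rm[OF alpha_pi(2)] fv_us_rm[OF alpha_pi(3)] alpha_pi(4) by metis
  define x1 where "x1 = XF \<sigma> (removeAll x (fv M))"
  have "sb M (\<sigma>(x:=Var x1)) = sb (us M x (Var y)) (\<sigma>(y:=Var x1))"
    using subst_rename[OF alpha_pi(2)] by simp
  also have "\<dots> = sb M' (\<sigma>(x':=Var x1))"
    using subst_rename[OF alpha_pi(3)] alpha_pi(4) by simp
  finally show ?case using alpha_pi.IH r by (simp add: Let_def x1_def)
qed auto

lemma Var_id: "(Var \<circ> id) = Var" by auto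

lemma alpha_iota: fixes M :: "('c,'v) trm" shows "al M (sb M Var)"
proof (induction M)
  case (Lam x A M)
  define x' where "x' = XF (Var \<circ> id :: _ \<Rightarrow> ('c,'v) trm) (removeAll x (fv M))"
  have fr: "\<forall>u\<in>set (removeAll x (fv M)). id u \<noteq> x'" using fresh_ren x'_def by blast
  have e: "sb (Lam x A M) Var = Lam x' (sb A Var) (sb M ((Var\<circ>id)(x:=Var x')))"
    by (simp add: Let_def x'_def Var_id)
  obtain y where y: "y \<notin> set (fv M @ fv (sb M ((Var\<circ>id)(x:=Var x'))))" using ex_fresh by blast
  have "us M x (Var y) = us (sb M ((Var\<circ>id)(x:=Var x'))) x' (Var y)"
    unfolding ren_gen[OF fr] by (simp add: usubst_def Var_id)
  thus ?case unfolding e using y by (intro alpha_lam[OF Lam.IH(1), of y]) auto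
next
  case (Pi x A M)
  define x' where "x' = XF (Var \<circ> id :: _ \<Rightarrow> ('c,'v) trm) (removeAll x (fv M))"
  have fr: "\<forall>u\<in>set (removeAll x (fv M)). id u \<noteq> x'" using fresh_ren x'_def by blast
  have e: "sb (Pi x A M) Var = Pi x' (sb A Var) (sb M ((Var\<circ>id)(x:=Var x')))"
    by (simp add: Let_def x'_def Var_id)
  obtain y where y: "y \<notin> set (fv M @ fv (sb M ((Var\<circ>id)(x:=Var x'))))" using ex_fresh by blast
  have "us M x (Var y) = us (sb M ((Var\<circ>id)(x:=Var x'))) x' (Var y)"
    unfolding ren_gen[OF fr] by (simp add: usubst_def Var_id)
  thus ?case unfolding e using y by (intro alpha_pi[OF Pi.IH(1), of y]) auto
qed (auto intro: alpha.intros)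

lemma beta_fv: "bt M N \<Longrightarrow> set (fv N) \<subseteq> set (fv M)"
  by (induction rule: beta.induct) (auto simp: usubst_def fv_subst split: if_splits)

lemma bc_refl: "bc M M" by (simp add: betaconv_def)
lemma bc_alpha: "al M N \<Longrightarrow> bc M N" by (simp add: betaconv_def r_into_rtranclp)
lemma bc_beta: "bt M N \<Longrightarrow> bc M N" by (simp add: betaconv_def r_into_rtranclp)
lemma bc_trans: "bc M N \<Longrightarrow> bc N P \<Longrightarrow> bc M P" unfolding betaconv_def by (rule rtranclp_trans)
lemma bc_sym: "bc M N \<Longrightarrow> bc N M"
  unfolding betaconv_def
proof (induction rule: rtranclp_induct)
  case (step y z)
  thus ?case by (metis (no_types, lifting) converse_rtranclp_into_rtranclp)
qed simp

lemma bc_cong: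
  assumes "\<And>P Q. al P Q \<Longrightarrow> al (F P) (F Q)" "\<And>P Q. bt P Q \<Longrightarrow> bt (F P) (F Q)" "bc M N"
  shows "bc (F M) (F N)"
  using assms(3) unfolding betaconv_def
proof (induction rule: rtranclp_induct)
  case (step y z)
  have "al (F y) (F z) \<or> bt (F y) (F z) \<or> al (F z) (F y) \<or> bt (F z) (F y)"
    using step(2) assms(1,2) by blast
  with step(3) show ?case by (rule rtranclp.rtrancl_into_rtrancl)
qed simp

lemma al_lam_body: "al P Q \<Longrightarrow> al (Lam x C P) (Lam x C Q)"
proof -
  assume a: "al P Q"
  obtain y where "y \<notin> set (fv P @ fv Q)" using ex_fresh by blast
  thus ?thesis by (intro alpha_lam[OF alpha_refl, of y]) (auto simp: usubst_def alpha_subst[OF a])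
qed
lemma al_pi_body: "al P Q \<Longrightarrow> al (Pi x C P) (Pi x C Q)"
proof -
  assume a: "al P Q"
  obtain y where "y \<notin> set (fv P @ fv Q)" using ex_fresh by blast
  thus ?thesis by (intro alpha_pi[OF alpha_refl, of y]) (auto simp: usubst_def alpha_subst[OF a])
qed
lemma al_lam_dom: "al P Q \<Longrightarrow> al (Lam x P C) (Lam x Q C)"
proof -
  assume a: "al P Q"
  obtain y where "y \<notin> set (fv C)" using ex_fresh by blast
  thus ?thesis by (intro alpha_lam[OF a, of y]) auto
qed
lemma al_pi_dom: "al P Q \<Longrightarrow> al (Pi x P C) (Pi x Q C)"
proof -
  assume a: "al P Q"
  obtain y where "y \<notin> set (fv C)" using ex_fresh by blast
  thus ?thesis by (intro alpha_pi[OF a, of y]) auto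
qed
lemma al_app_l: "al P Q \<Longrightarrow> al (App P C) (App Q C)" by (rule alpha_app[OF _ alpha_refl])
lemma al_app_r: "al P Q \<Longrightarrow> al (App C P) (App C Q)" by (rule alpha_app[OF alpha_refl])

lemma Var_upd: "(Var \<circ> f)(x := Var y) = Var \<circ> f(x:=y)" by auto

lemma beta_subst: fixes M N :: "('c,'v) trm" shows "bt M N \<Longrightarrow> bc (sb M (Var\<circ>f)) (sb N (Var\<circ>f))"
proof (induction arbitrary: f rule: beta.induct)
  case (beta_contr x A M N)
  define x1 where "x1 = XF (Var\<circ>f :: _ \<Rightarrow> ('c,'v) trm) (removeAll x (fv M))"
  have fr: "\<forall>u\<in>set (removeAll x (fv M)). f u \<noteq> x1" using fresh_ren x1_def by blast
  have e: "sb (App (Lam x A M) N) (Var\<circ>f) = App (Lam x1 (sb A (Var\<circ>f)) (sb M ((Var\<circ>f)(x:=Var x1)))) (sb N (Var\<circ>f))"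
    by (simp add: Let_def x1_def)
  have "bt (App (Lam x1 (sb A (Var\<circ>f)) (sb M ((Var\<circ>f)(x:=Var x1)))) (sb N (Var\<circ>f)))
      (us (sb M ((Var\<circ>f)(x:=Var x1))) x1 (sb N (Var\<circ>f)))" by (rule beta_contr)
  also have "us (sb M ((Var\<circ>f)(x:=Var x1))) x1 (sb N (Var\<circ>f)) = sb (us M x N) (Var\<circ>f)"
    unfolding ren_gen[OF fr] subst_usubst ..
  finally show ?case unfolding e by (rule bc_beta)
next
  case (beta_lam_body M M' x A)
  define x1 where "x1 = XF (Var\<circ>f :: _ \<Rightarrow> ('c,'v) trm) (removeAll x (fv M))"
  define x2 where "x2 = XF (Var\<circ>f :: _ \<Rightarrow> ('c,'v) trm) (removeAll x (fv M'))"
  have fr1: "\<forall>u\<in>set (removeAll x (fv M')). f u \<noteq> x1"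
    using fresh_ren[of "removeAll x (fv M)" f] x1_def beta_fv[OF beta_lam_body(1)] by auto
  have fr2: "\<forall>u\<in>set (removeAll x (fv M')). f u \<noteq> x2" using fresh_ren x2_def by blast
  have e1: "sb (Lam x A M) (Var\<circ>f) = Lam x1 (sb A (Var\<circ>f)) (sb M ((Var\<circ>f)(x:=Var x1)))"
    by (simp add: Let_def x1_def)
  have e2: "sb (Lam x A M') (Var\<circ>f) = Lam x2 (sb A (Var\<circ>f)) (sb M' ((Var\<circ>f)(x:=Var x2)))"
    by (simp add: Let_def x2_def)
  have s1: "bc (Lam x1 (sb A (Var\<circ>f)) (sb M ((Var\<circ>f)(x:=Var x1)))) (Lam x1 (sb A (Var\<circ>f)) (sb M' ((Var\<circ>f)(x:=Var x1))))"
    using beta_lam_body.IH[of "f(x:=x1)"] unfolding Var_upd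
    by (rule bc_cong[where F="\<lambda>P. Lam x1 (sb A (Var\<circ>f)) P", rotated 2]) (auto intro: al_lam_body beta.intros)
  obtain y where y: "y \<notin> set (fv (sb M' ((Var\<circ>f)(x:=Var x1))) @ fv (sb M' ((Var\<circ>f)(x:=Var x2))))"
    using ex_fresh by blast
  have "al (Lam x1 (sb A (Var\<circ>f)) (sb M' ((Var\<circ>f)(x:=Var x1)))) (Lam x2 (sb A (Var\<circ>f)) (sb M' ((Var\<circ>f)(x:=Var x2))))"
    using y by (intro alpha_lam[OF alpha_refl, of y]) (auto simp: ren_gen[OF fr1] ren_gen[OF fr2])
  thus ?case unfolding e1 e2 using s1 bc_alpha bc_trans by blast
next
  case (beta_pi_body M M' x A)
  define x1 where "x1 = XF (Var\<circ>f :: _ \<Rightarrow> ('c,'v) trm) (removeAll x (fv M))"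
  define x2 where "x2 = XF (Var\<circ>f :: _ \<Rightarrow> ('c,'v) trm) (removeAll x (fv M'))"
  have fr1: "\<forall>u\<in>set (removeAll x (fv M')). f u \<noteq> x1"
    using fresh_ren[of "removeAll x (fv M)" f] x1_def beta_fv[OF beta_pi_body(1)] by auto
  have fr2: "\<forall>u\<in>set (removeAll x (fv M')). f u \<noteq> x2" using fresh_ren x2_def by blast
  have e1: "sb (Pi x A M) (Var\<circ>f) = Pi x1 (sb A (Var\<circ>f)) (sb M ((Var\<circ>f)(x:=Var x1)))"
    by (simp add: Let_def x1_def)
  have e2: "sb (Pi x A M') (Var\<circ>f) = Pi x2 (sb A (Var\<circ>f)) (sb M' ((Var\<circ>f)(x:=Var x2)))"
    by (simp add: Let_def x2_def)
  have s1: "bc (Pi x1 (sb A (Var\<circ>f)) (sb M ((Var\<circ>f)(x:=Var x1)))) (Pi x1 (sb A (Var\<circ>f)) (sb M' ((Var\<circ>f)(x:=Var x1))))"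
    using beta_pi_body.IH[of "f(x:=x1)"] unfolding Var_upd
    by (rule bc_cong[where F="\<lambda>P. Pi x1 (sb A (Var\<circ>f)) P", rotated 2]) (auto intro: al_pi_body beta.intros)
  obtain y where y: "y \<notin> set (fv (sb M' ((Var\<circ>f)(x:=Var x1))) @ fv (sb M' ((Var\<circ>f)(x:=Var x2))))"
    using ex_fresh by blast
  have "al (Pi x1 (sb A (Var\<circ>f)) (sb M' ((Var\<circ>f)(x:=Var x1)))) (Pi x2 (sb A (Var\<circ>f)) (sb M' ((Var\<circ>f)(x:=Var x2))))"
    using y by (intro alpha_pi[OF alpha_refl, of y]) (auto simp: ren_gen[OF fr1] ren_gen[OF fr2])
  thus ?case unfolding e1 e2 using s1 bc_alpha bc_trans by blast
next
  case (beta_lam_dom A A' x M)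
  define x1 where "x1 = XF (Var\<circ>f :: _ \<Rightarrow> ('c,'v) trm) (removeAll x (fv M))"
  have e: "\<And>A. sb (Lam x A M) (Var\<circ>f) = Lam x1 (sb A (Var\<circ>f)) (sb M ((Var\<circ>f)(x:=Var x1)))"
    by (simp add: Let_def x1_def)
  show ?case unfolding e using beta_lam_dom.IH[of f]
    by (rule bc_cong[where F="\<lambda>P. Lam x1 P (sb M ((Var\<circ>f)(x:=Var x1)))", rotated 2]) (auto intro: al_lam_dom beta.intros)
next
  case (beta_pi_dom A A' x M)
  define x1 where "x1 = XF (Var\<circ>f :: _ \<Rightarrow> ('c,'v) trm) (removeAll x (fv M))"
  have e: "\<And>A. sb (Pi x A M) (Var\<circ>f) = Pi x1 (sb A (Var\<circ>f)) (sb M ((Var\<circ>f)(x:=Var x1)))"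
    by (simp add: Let_def x1_def)
  show ?case unfolding e using beta_pi_dom.IH[of f]
    by (rule bc_cong[where F="\<lambda>P. Pi x1 P (sb M ((Var\<circ>f)(x:=Var x1)))", rotated 2]) (auto intro: al_pi_dom beta.intros)
next
  case (beta_app_l M N P)
  show ?case using beta_app_l.IH[of f]
    unfolding subst.simps(3) by (rule bc_cong[where F="\<lambda>Q. App Q (sb P (Var\<circ>f))", rotated 2]) (auto intro: al_app_l beta.intros)
next
  case (beta_app_r M N P)
  show ?case using beta_app_r.IH[of f]
    unfolding subst.simps(3) by (rule bc_cong[where F="\<lambda>Q. App (sb P (Var\<circ>f)) Q", rotated 2]) (auto intro: al_app_r beta.intros)
qed

lemma bc_subst: "bc A B \<Longrightarrow> bc (sb A (Var\<circ>f)) (sb B (Var\<circ>f))"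
  unfolding betaconv_def[symmetric, of enc dec chi]
proof -
  assume "bc A B"
  hence "(\<lambda>M N. al M N \<or> bt M N \<or> al N M \<or> bt N M)\<^sup>*\<^sup>* A B" by (simp add: betaconv_def)
  thus ?thesis
  proof (induction rule: rtranclp_induct)
    case base show ?case by (rule bc_refl)
  next
    case (step y z)
    have "bc (sb y (Var\<circ>f)) (sb z (Var\<circ>f))"
      using step(2) alpha_subst beta_subst bc_sym bc_refl by metis
    thus ?case using step(3) bc_trans by blast
  qed
qed

end


lemma typing_ok:
  shows "ctx_ok enc dec chi Ax Rl \<Gamma> \<Longrightarrow> True"
    and "typing enc dec chi Ax Rl \<Gamma> M B \<Longrightarrow> ctx_ok enc dec chi Ax Rl \<Gamma>"
  by (induction rule: ctx_ok_typing.inducts) auto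

lemma weak_aux:
  shows "ctx_ok enc dec chi Ax Rl \<Gamma> \<Longrightarrow> True"
    and "typing enc dec chi Ax Rl \<Gamma> M B \<Longrightarrow> (\<forall>\<Gamma>'. ctx_ok enc dec chi Ax Rl \<Gamma>' \<longrightarrow> set \<Gamma> \<subseteq> set \<Gamma>'
           \<longrightarrow> typing enc dec chi Ax Rl \<Gamma>' M B)"
proof (induction rule: ctx_ok_typing.inducts)
  case (ty_prod s1 s2 s3 \<Gamma> A B x)
  show ?case
  proof (intro allI impI)
    fix \<Gamma>' assume ok': "ctx_ok enc dec chi Ax Rl \<Gamma>'" and sub: "set \<Gamma> \<subseteq> set \<Gamma>'"
    have A': "typing enc dec chi Ax Rl \<Gamma>' A (Const s1)" using ty_prod ok' sub by blast
    have dom: "set (map fst \<Gamma>) \<subseteq> set (map fst \<Gamma>')" using sub by auto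
    show "typing enc dec chi Ax Rl \<Gamma>' (Pi x A B) (Const s3)"
    proof (rule ctx_ok_typing.ty_prod[OF ty_prod(1) A'], intro allI impI)
      fix y assume y: "y \<notin> set (map fst \<Gamma>')"
      hence "y \<notin> set (map fst \<Gamma>)" using dom by auto
      moreover have "ctx_ok enc dec chi Ax Rl ((y,A)#\<Gamma>')" by (rule ctx_ok_typing.ok_cons[OF ok' A' y])
      moreover have "set ((y,A)#\<Gamma>) \<subseteq> set ((y,A)#\<Gamma>')" using sub by auto
      ultimately show "typing enc dec chi Ax Rl ((y,A)#\<Gamma>') (usubst enc dec chi B x (Var y)) (Const s2)"
        using ty_prod by blast
    qed
  qed
next
  case (ty_abs s1 s2 s3 \<Gamma> A B y M x)
  show ?case
  proof (intro allI impI)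
    fix \<Gamma>' assume ok': "ctx_ok enc dec chi Ax Rl \<Gamma>'" and sub: "set \<Gamma> \<subseteq> set \<Gamma>'"
    have A': "typing enc dec chi Ax Rl \<Gamma>' A (Const s1)" using ty_abs ok' sub by blast
    have dom: "set (map fst \<Gamma>) \<subseteq> set (map fst \<Gamma>')" using sub by auto
    show "typing enc dec chi Ax Rl \<Gamma>' (Lam x A M) (Pi y A B)"
    proof (rule ctx_ok_typing.ty_abs[OF ty_abs(1) A'])
      show "\<forall>z. z \<notin> set (map fst \<Gamma>') \<longrightarrow> typing enc dec chi Ax Rl ((z, A) # \<Gamma>') (usubst enc dec chi B y (Var z)) (Const s2)"
      proof (intro allI impI)
        fix z assume z: "z \<notin> set (map fst \<Gamma>')"
        hence "z \<notin> set (map fst \<Gamma>)" using dom by auto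
        moreover have "ctx_ok enc dec chi Ax Rl ((z,A)#\<Gamma>')" by (rule ctx_ok_typing.ok_cons[OF ok' A' z])
        moreover have "set ((z,A)#\<Gamma>) \<subseteq> set ((z,A)#\<Gamma>')" using sub by auto
        ultimately show "typing enc dec chi Ax Rl ((z,A)#\<Gamma>') (usubst enc dec chi B y (Var z)) (Const s2)"
          using ty_abs by blast
      qed
      show "\<forall>z. z \<notin> set (map fst \<Gamma>') \<longrightarrow> typing enc dec chi Ax Rl ((z, A) # \<Gamma>') (usubst enc dec chi M x (Var z)) (usubst enc dec chi B y (Var z))"
      proof (intro allI impI)
        fix z assume z: "z \<notin> set (map fst \<Gamma>')"
        hence "z \<notin> set (map fst \<Gamma>)" using dom by auto
        moreover have "ctx_ok enc dec chi Ax Rl ((z,A)#\<Gamma>')" by (rule ctx_ok_typing.ok_cons[OF ok' A' z])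
        moreover have "set ((z,A)#\<Gamma>) \<subseteq> set ((z,A)#\<Gamma>')" using sub by auto
        ultimately show "typing enc dec chi Ax Rl ((z,A)#\<Gamma>') (usubst enc dec chi M x (Var z)) (usubst enc dec chi B y (Var z))"
          using ty_abs by blast
      qed
    qed
  qed
qed (auto intro: ctx_ok_typing.intros)

lemma weaken: "typing enc dec chi Ax Rl \<Gamma> M B \<Longrightarrow> ctx_ok enc dec chi Ax Rl \<Gamma>' \<Longrightarrow> set \<Gamma> \<subseteq> set \<Gamma>'
    \<Longrightarrow> typing enc dec chi Ax Rl \<Gamma>' M B"
  using weak_aux(2) by blast



context vs begin

lemma fv_aux:
  shows "ctx_ok enc dec chi Ax Rl \<Gamma> \<Longrightarrow> (\<forall>u C. (u,C) \<in> set \<Gamma> \<longrightarrow> set (fv C) \<subseteq> set (map fst \<Gamma>))"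
    and "typing enc dec chi Ax Rl \<Gamma> M B \<Longrightarrow> set (fv M) \<subseteq> set (map fst \<Gamma>)"
proof (induction rule: ctx_ok_typing.inducts)
  case (ty_prod s1 s2 s3 \<Gamma> A B x)
  have "set (removeAll x (fv B)) \<subseteq> set (map fst \<Gamma>)"
  proof
    fix u assume u: "u \<in> set (removeAll x (fv B))"
    obtain y where y: "y \<notin> set (u # map fst \<Gamma>)" using ex_fresh by blast
    have "u \<in> set (fv (us B x (Var y)))" using u by (auto simp: usubst_def fv_subst)
    moreover have "\<forall>y. y \<notin> set (map fst \<Gamma>) \<longrightarrow> set (fv (us B x (Var y))) \<subseteq> set (map fst ((y,A)#\<Gamma>))"
      using ty_prod by blast
    ultimately show "u \<in> set (map fst \<Gamma>)" using y by auto
  qed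
  thus ?case using ty_prod by auto
next
  case (ty_abs s1 s2 s3 \<Gamma> A B y M x)
  have "set (removeAll x (fv M)) \<subseteq> set (map fst \<Gamma>)"
  proof
    fix u assume u: "u \<in> set (removeAll x (fv M))"
    obtain z where z: "z \<notin> set (u # map fst \<Gamma>)" using ex_fresh by blast
    have "u \<in> set (fv (us M x (Var z)))" using u by (auto simp: usubst_def fv_subst)
    moreover have "\<forall>z. z \<notin> set (map fst \<Gamma>) \<longrightarrow> set (fv (us M x (Var z))) \<subseteq> set (map fst ((z,A)#\<Gamma>))"
      using ty_abs by blast
    ultimately show "u \<in> set (map fst \<Gamma>)" using z by auto
  qed
  thus ?case using ty_abs by auto
next
  case (ok_cons \<Gamma> A s x)
  thus ?case by auto
next
  case (ty_var \<Gamma> x A)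
  thus ?case by (auto intro: image_eqI[of x fst "(x,A)"])
next
  case (ty_app \<Gamma> M x A B N s)
  thus ?case by auto
qed auto

definition good where
  "good Ax Rl \<Gamma> \<Delta> f \<longleftrightarrow> ctx_ok enc dec chi Ax Rl \<Delta> \<and>
     (\<forall>u C. (u,C) \<in> set \<Gamma> \<longrightarrow> (\<exists>C'. (f u, C') \<in> set \<Delta> \<and> bc C' (sb C (Var\<circ>f)))
         \<and> (\<exists>s. typing enc dec chi Ax Rl \<Delta> (sb C (Var\<circ>f)) (Const s)))"

lemma good_extend:
  assumes g: "good Ax Rl \<Gamma> \<Delta> f" and A: "typing enc dec chi Ax Rl \<Delta> (sb A (Var\<circ>f)) (Const s)"
    and w: "w \<notin> set (map fst \<Delta>)" and z: "z \<notin> set (map fst \<Gamma>)" and zA: "z \<notin> set (fv A)"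
    and zC: "\<forall>u C. (u,C) \<in> set \<Gamma> \<longrightarrow> z \<notin> set (fv C)"
  shows "good Ax Rl ((z,A)#\<Gamma>) ((w, sb A (Var\<circ>f))#\<Delta>) (f(z:=w))"
proof -
  have ok: "ctx_ok enc dec chi Ax Rl \<Delta>" using g good_def by blast
  have ok': "ctx_ok enc dec chi Ax Rl ((w, sb A (Var\<circ>f))#\<Delta>)" by (rule ctx_ok_typing.ok_cons[OF ok A w])
  have sub: "set \<Delta> \<subseteq> set ((w, sb A (Var\<circ>f))#\<Delta>)" by auto
  have agr: "\<And>C. z \<notin> set (fv C) \<Longrightarrow> sb C (Var\<circ>f(z:=w)) = sb C (Var\<circ>f)"
    by (rule subst_agree) auto
  have "\<forall>u C. (u, C) \<in> set ((z, A) # \<Gamma>) \<longrightarrow> (\<exists>C'. ((f(z := w)) u, C') \<in> set ((w, sb A (Var \<circ> f)) # \<Delta>) \<and> bc C' (sb C (Var \<circ> (f(z := w))))) \<and>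
         (\<exists>s. typing enc dec chi Ax Rl ((w, sb A (Var \<circ> f)) # \<Delta>) (sb C (Var \<circ> (f(z := w)))) (Const s))"
  proof (intro allI impI)
    fix u C assume uC: "(u, C) \<in> set ((z, A) # \<Gamma>)"
    show "(\<exists>C'. ((f(z := w)) u, C') \<in> set ((w, sb A (Var \<circ> f)) # \<Delta>) \<and> bc C' (sb C (Var \<circ> (f(z := w))))) \<and>
         (\<exists>s. typing enc dec chi Ax Rl ((w, sb A (Var \<circ> f)) # \<Delta>) (sb C (Var \<circ> (f(z := w)))) (Const s))"
    proof (cases "(u,C) = (z,A)")
      case True
      hence "u = z" "C = A" by auto
      thus ?thesis using agr[OF zA] weaken[OF A ok' sub] bc_refl by auto
    next
      case False
      hence uC': "(u,C) \<in> set \<Gamma>" using uC by auto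
      hence uz: "u \<noteq> z" using z by force
      obtain C' s' where C': "(f u, C') \<in> set \<Delta>" "bc C' (sb C (Var\<circ>f))"
        and T: "typing enc dec chi Ax Rl \<Delta> (sb C (Var\<circ>f)) (Const s')"
        using g uC' unfolding good_def by blast
      have e: "sb C (Var\<circ>(f(z:=w))) = sb C (Var\<circ>f)" using agr zC uC' by blast
      have "((f(z := w)) u, C') \<in> set ((w, sb A (Var \<circ> f)) # \<Delta>)" using uz C' by simp
      moreover have "typing enc dec chi Ax Rl ((w, sb A (Var \<circ> f)) # \<Delta>) (sb C (Var \<circ> (f(z := w)))) (Const s')"
        unfolding e by (rule weaken[OF T ok' sub])
      moreover have "bc C' (sb C (Var \<circ> (f(z := w))))" unfolding e by (rule C'(2))
      ultimately show ?thesis by blast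
    qed
  qed
  thus ?thesis unfolding good_def using ok' by blast
qed

lemma ren_bind:
  fixes B :: "('c,'v) trm"
  assumes "z \<notin> set (removeAll x (fv B))"
  shows "sb (us B x (Var z)) (Var\<circ>f(z:=w)) = us (sb B ((Var\<circ>f)(x:=Var (XF (Var\<circ>f :: _ \<Rightarrow> ('c,'v) trm) (removeAll x (fv B)))))) (XF (Var\<circ>f :: _ \<Rightarrow> ('c,'v) trm) (removeAll x (fv B))) (Var w)"
proof -
  have "sb (us B x (Var z)) (Var\<circ>f(z:=w)) = sb B ((Var\<circ>f)(x:=Var w))"
    using subst_rename[OF assms, of "Var\<circ>f" "Var w"] by (simp add: Var_upd)
  also have "\<dots> = us (sb B ((Var\<circ>f)(x:=Var (XF (Var\<circ>f :: _ \<Rightarrow> ('c,'v) trm) (removeAll x (fv B)))))) (XF (Var\<circ>f :: _ \<Rightarrow> ('c,'v) trm) (removeAll x (fv B))) (Var w)"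
    by (rule ren_gen[symmetric]) (rule fresh_ren)
  finally show ?thesis .
qed

end


context vs begin

lemma subst_typing:
  fixes \<Gamma> :: "('c,'v) ctx"
  shows "ctx_ok enc dec chi Ax Rl \<Gamma> \<Longrightarrow> True"
    and "typing enc dec chi Ax Rl \<Gamma> M B \<Longrightarrow> (\<forall>\<Delta> f. good Ax Rl \<Gamma> \<Delta> f \<longrightarrow>
           typing enc dec chi Ax Rl \<Delta> (sb M (Var\<circ>f)) (sb B (Var\<circ>f)))"
proof (induction rule: ctx_ok_typing.inducts)
  case (ty_sort \<Gamma> s1 s2)
  thus ?case by (auto intro: ctx_ok_typing.ty_sort simp: good_def)
next
  case (ty_var \<Gamma> x A)
  show ?case
  proof (intro allI impI)
    fix \<Delta> f assume g: "good Ax Rl \<Gamma> \<Delta> f"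
    obtain C' s where C': "(f x, C') \<in> set \<Delta>" "bc C' (sb A (Var\<circ>f))"
      and T: "typing enc dec chi Ax Rl \<Delta> (sb A (Var\<circ>f)) (Const s)"
      using g ty_var unfolding good_def by blast
    have ok: "ctx_ok enc dec chi Ax Rl \<Delta>" using g good_def by blast
    have "typing enc dec chi Ax Rl \<Delta> (Var (f x)) C'" by (rule ctx_ok_typing.ty_var[OF ok C'(1)])
    hence "typing enc dec chi Ax Rl \<Delta> (Var (f x)) (sb A (Var\<circ>f))"
      by (rule ctx_ok_typing.ty_conv[OF _ C'(2) T])
    thus "typing enc dec chi Ax Rl \<Delta> (sb (Var x) (Var\<circ>f)) (sb A (Var\<circ>f))" by simp
  qed
next
  case (ty_prod s1 s2 s3 \<Gamma> A B x)
  show ?case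
  proof (intro allI impI)
    fix \<Delta> f assume g: "good Ax Rl \<Gamma> \<Delta> f"
    define x1 where "x1 = XF (Var\<circ>f :: _ \<Rightarrow> ('c,'v) trm) (removeAll x (fv B))"
    have "typing enc dec chi Ax Rl \<Delta> (sb A (Var\<circ>f)) (sb (Const s1) (Var\<circ>f))" using ty_prod g by blast
    hence A': "typing enc dec chi Ax Rl \<Delta> (sb A (Var\<circ>f)) (Const s1)" by simp
    have e: "sb (Pi x A B) (Var\<circ>f) = Pi x1 (sb A (Var\<circ>f)) (sb B ((Var\<circ>f)(x:=Var x1)))"
      by (simp add: Let_def x1_def)
    show "typing enc dec chi Ax Rl \<Delta> (sb (Pi x A B) (Var\<circ>f)) (sb (Const s3) (Var\<circ>f))"
      unfolding e subst.simps(1)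
    proof (rule ctx_ok_typing.ty_prod[OF ty_prod(1) A'], intro allI impI)
      fix w assume w: "w \<notin> set (map fst \<Delta>)"
      obtain z where z: "z \<notin> set (map fst \<Gamma> @ fv A @ fv B @ concat (map (fv \<circ> snd) \<Gamma>))"
        using ex_fresh by blast
      have zC: "\<forall>u C. (u,C) \<in> set \<Gamma> \<longrightarrow> z \<notin> set (fv C)" using z by force
      have z\<Gamma>: "z \<notin> set (map fst \<Gamma>)" using z by simp
      have g': "good Ax Rl ((z,A)#\<Gamma>) ((w, sb A (Var\<circ>f))#\<Delta>) (f(z:=w))"
        by (rule good_extend[OF g A' w z\<Gamma> _ zC]) (use z in simp)
      have "typing enc dec chi Ax Rl ((w, sb A (Var\<circ>f))#\<Delta>) (sb (us B x (Var z)) (Var\<circ>(f(z:=w))))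
             (sb (Const s2) (Var\<circ>(f(z:=w))))"
        using ty_prod z\<Gamma> g' by blast
      moreover have "sb (us B x (Var z)) (Var\<circ>(f(z:=w))) = us (sb B ((Var\<circ>f)(x:=Var x1))) x1 (Var w)"
        unfolding x1_def by (rule ren_bind) (use z in simp)
      ultimately show "typing enc dec chi Ax Rl ((w, sb A (Var\<circ>f))#\<Delta>) (us (sb B ((Var\<circ>f)(x:=Var x1))) x1 (Var w)) (Const s2)"
        by simp
    qed
  qed
next
  case (ty_abs s1 s2 s3 \<Gamma> A B y M x)
  show ?case
  proof (intro allI impI)
    fix \<Delta> f assume g: "good Ax Rl \<Gamma> \<Delta> f"
    define x1 where "x1 = XF (Var\<circ>f :: _ \<Rightarrow> ('c,'v) trm) (removeAll x (fv M))"
    define y1 where "y1 = XF (Var\<circ>f :: _ \<Rightarrow> ('c,'v) trm) (removeAll y (fv B))"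
    have "typing enc dec chi Ax Rl \<Delta> (sb A (Var\<circ>f)) (sb (Const s1) (Var\<circ>f))" using ty_abs g by blast
    hence A': "typing enc dec chi Ax Rl \<Delta> (sb A (Var\<circ>f)) (Const s1)" by simp
    have e: "sb (Lam x A M) (Var\<circ>f) = Lam x1 (sb A (Var\<circ>f)) (sb M ((Var\<circ>f)(x:=Var x1)))"
      by (simp add: Let_def x1_def)
    have e2: "sb (Pi y A B) (Var\<circ>f) = Pi y1 (sb A (Var\<circ>f)) (sb B ((Var\<circ>f)(y:=Var y1)))"
      by (simp add: Let_def y1_def)
    have key: "typing enc dec chi Ax Rl ((w, sb A (Var\<circ>f))#\<Delta>) (us (sb B ((Var\<circ>f)(y:=Var y1))) y1 (Var w)) (Const s2)
       \<and> typing enc dec chi Ax Rl ((w, sb A (Var\<circ>f))#\<Delta>) (us (sb M ((Var\<circ>f)(x:=Var x1))) x1 (Var w))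
            (us (sb B ((Var\<circ>f)(y:=Var y1))) y1 (Var w))"
      if w: "w \<notin> set (map fst \<Delta>)" for w
    proof -
      obtain z where z: "z \<notin> set (map fst \<Gamma> @ fv A @ fv B @ fv M @ concat (map (fv \<circ> snd) \<Gamma>))"
        using ex_fresh by blast
      have zC: "\<forall>u C. (u,C) \<in> set \<Gamma> \<longrightarrow> z \<notin> set (fv C)" using z by force
      have z\<Gamma>: "z \<notin> set (map fst \<Gamma>)" using z by simp
      have g': "good Ax Rl ((z,A)#\<Gamma>) ((w, sb A (Var\<circ>f))#\<Delta>) (f(z:=w))"
        by (rule good_extend[OF g A' w z\<Gamma> _ zC]) (use z in simp)
      have T1: "typing enc dec chi Ax Rl ((w, sb A (Var\<circ>f))#\<Delta>) (sb (us B y (Var z)) (Var\<circ>(f(z:=w))))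
             (sb (Const s2) (Var\<circ>(f(z:=w))))"
        using ty_abs z\<Gamma> g' by blast
      have T2: "typing enc dec chi Ax Rl ((w, sb A (Var\<circ>f))#\<Delta>) (sb (us M x (Var z)) (Var\<circ>(f(z:=w))))
             (sb (us B y (Var z)) (Var\<circ>(f(z:=w))))"
        using ty_abs z\<Gamma> g' by blast
      have eB: "sb (us B y (Var z)) (Var\<circ>(f(z:=w))) = us (sb B ((Var\<circ>f)(y:=Var y1))) y1 (Var w)"
        unfolding y1_def by (rule ren_bind) (use z in simp)
      have eM: "sb (us M x (Var z)) (Var\<circ>(f(z:=w))) = us (sb M ((Var\<circ>f)(x:=Var x1))) x1 (Var w)"
        unfolding x1_def by (rule ren_bind) (use z in simp)
      show ?thesis using T1 T2 unfolding eB eM by simp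
    qed
    show "typing enc dec chi Ax Rl \<Delta> (sb (Lam x A M) (Var\<circ>f)) (sb (Pi y A B) (Var\<circ>f))"
      unfolding e e2
      by (rule ctx_ok_typing.ty_abs[OF ty_abs(1) A']) (use key in blast)+
  qed
next
  case (ty_app \<Gamma> M x A B N s)
  show ?case
  proof (intro allI impI)
    fix \<Delta> f assume g: "good Ax Rl \<Gamma> \<Delta> f"
    define x1 where "x1 = XF (Var\<circ>f :: _ \<Rightarrow> ('c,'v) trm) (removeAll x (fv B))"
    have e: "sb (Pi x A B) (Var\<circ>f) = Pi x1 (sb A (Var\<circ>f)) (sb B ((Var\<circ>f)(x:=Var x1)))"
      by (simp add: Let_def x1_def)
    have TM: "typing enc dec chi Ax Rl \<Delta> (sb M (Var\<circ>f)) (sb (Pi x A B) (Var\<circ>f))" using ty_app g by blast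
    have TN: "typing enc dec chi Ax Rl \<Delta> (sb N (Var\<circ>f)) (sb A (Var\<circ>f))" using ty_app g by blast
    have TB: "typing enc dec chi Ax Rl \<Delta> (sb (us B x N) (Var\<circ>f)) (sb (Const s) (Var\<circ>f))" using ty_app g by blast
    have eq: "us (sb B ((Var\<circ>f)(x:=Var x1))) x1 (sb N (Var\<circ>f)) = sb (us B x N) (Var\<circ>f)"
      unfolding x1_def ren_gen[OF fresh_ren] subst_usubst ..
    have "typing enc dec chi Ax Rl \<Delta> (App (sb M (Var\<circ>f)) (sb N (Var\<circ>f))) (us (sb B ((Var\<circ>f)(x:=Var x1))) x1 (sb N (Var\<circ>f)))"
      by (rule ctx_ok_typing.ty_app[OF TM[unfolded e] TN]) (use TB eq in simp)
    thus "typing enc dec chi Ax Rl \<Delta> (sb (App M N) (Var\<circ>f)) (sb (us B x N) (Var\<circ>f))"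
      unfolding eq by simp
  qed
next
  case (ty_conv \<Gamma> M A B s)
  show ?case
  proof (intro allI impI)
    fix \<Delta> f assume g: "good Ax Rl \<Gamma> \<Delta> f"
    have TM: "typing enc dec chi Ax Rl \<Delta> (sb M (Var\<circ>f)) (sb A (Var\<circ>f))" using ty_conv g by blast
    have TB: "typing enc dec chi Ax Rl \<Delta> (sb B (Var\<circ>f)) (sb (Const s) (Var\<circ>f))" using ty_conv g by blast
    show "typing enc dec chi Ax Rl \<Delta> (sb M (Var\<circ>f)) (sb B (Var\<circ>f))"
      by (rule ctx_ok_typing.ty_conv[OF TM bc_subst[OF ty_conv(3)]]) (use TB in simp)
  qed
qed auto

lemma ctx_iota:
  fixes \<Gamma> :: "('c,'v) ctx"
  shows "ctx_ok enc dec chi Ax Rl \<Gamma> \<Longrightarrow> \<forall>u C. (u,C) \<in> set \<Gamma> \<longrightarrow> (\<exists>s. typing enc dec chi Ax Rl \<Gamma> (sb C Var) (Const s))"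
proof (induction \<Gamma>)
  case Nil thus ?case by simp
next
  case (Cons p \<Gamma>0)
  obtain u0 C0 where p: "p = (u0, C0)" by (cases p)
  from Cons.prems obtain s0 where ok0: "ctx_ok enc dec chi Ax Rl \<Gamma>0"
    and T0: "typing enc dec chi Ax Rl \<Gamma>0 C0 (Const s0)" and u0: "u0 \<notin> set (map fst \<Gamma>0)"
    unfolding p by (cases rule: ctx_ok.cases) auto
  have IH: "\<forall>u C. (u,C) \<in> set \<Gamma>0 \<longrightarrow> (\<exists>s. typing enc dec chi Ax Rl \<Gamma>0 (sb C Var) (Const s))"
    using Cons.IH ok0 by blast
  have g: "good Ax Rl \<Gamma>0 \<Gamma>0 id"
    unfolding good_def Var_id using ok0 IH bc_alpha alpha_iota by fastforce
  have "typing enc dec chi Ax Rl \<Gamma>0 (sb C0 (Var\<circ>id)) (sb (Const s0) (Var\<circ>id))"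
    using subst_typing(2)[OF T0] g by blast
  hence T0': "typing enc dec chi Ax Rl \<Gamma>0 (sb C0 Var) (Const s0)" unfolding Var_id by simp
  have sub: "set \<Gamma>0 \<subseteq> set (p # \<Gamma>0)" by auto
  show ?case
  proof (intro allI impI)
    fix u C assume uC: "(u, C) \<in> set (p # \<Gamma>0)"
    show "\<exists>s. typing enc dec chi Ax Rl (p # \<Gamma>0) (sb C Var) (Const s)"
    proof (cases "(u,C) = p")
      case True
      thus ?thesis using weaken[OF T0' Cons.prems sub] p by auto
    next
      case False
      then obtain s where "typing enc dec chi Ax Rl \<Gamma>0 (sb C Var) (Const s)" using IH uC by auto
      thus ?thesis using weaken[OF _ Cons.prems sub] by blast
    qed
  qed
qed

end

theorem mainTheorem18:
  fixes enc :: "'v \<Rightarrow> nat" and dec :: "nat \<Rightarrow> 'v" and chi :: "nat list \<Rightarrow> nat"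
    and Ax :: "'c \<Rightarrow> 'c \<Rightarrow> bool" and Rl :: "'c \<Rightarrow> 'c \<Rightarrow> 'c \<Rightarrow> bool"
    and \<Gamma> :: "('c, 'v) ctx" and x y :: 'v and A M B :: "('c, 'v) trm"
  assumes "var_setup enc dec chi"
    and "y \<notin> set (map fst \<Gamma>)"
    and "typing enc dec chi Ax Rl ((x, A) # \<Gamma>) M B"
  shows "typing enc dec chi Ax Rl ((y, A) # \<Gamma>)
           (usubst enc dec chi M x (Var y)) (usubst enc dec chi B x (Var y))"
proof -
  interpret vs enc dec chi by unfold_locales (rule assms(1))
  have ok1: "ctx_ok enc dec chi Ax Rl ((x,A)#\<Gamma>)" by (rule typing_ok(2)[OF assms(3)])
  then obtain s0 where ok\<Gamma>: "ctx_ok enc dec chi Ax Rl \<Gamma>"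
    and TA: "typing enc dec chi Ax Rl \<Gamma> A (Const s0)" and x\<Gamma>: "x \<notin> set (map fst \<Gamma>)"
    by (cases rule: ctx_ok.cases) auto
  have ok\<Delta>: "ctx_ok enc dec chi Ax Rl ((y,A)#\<Gamma>)" by (rule ctx_ok_typing.ok_cons[OF ok\<Gamma> TA assms(2)])
  have fvA: "x \<notin> set (fv A)" using fv_aux(2)[OF TA] x\<Gamma> by auto
  have fvC: "\<forall>u C. (u,C) \<in> set \<Gamma> \<longrightarrow> x \<notin> set (fv C)" using fv_aux(1)[OF ok\<Gamma>] x\<Gamma> by blast
  have I: "\<forall>u C. (u,C) \<in> set ((y,A)#\<Gamma>) \<longrightarrow> (\<exists>s. typing enc dec chi Ax Rl ((y,A)#\<Gamma>) (subst enc dec chi C Var) (Const s))"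
    by (rule ctx_iota[OF ok\<Delta>])
  define f where "f = id(x:=y)"
  have Vf: "Var\<circ>f = Var(x:=Var y)" by (auto simp: f_def)
  have agr: "\<And>C. x \<notin> set (fv C) \<Longrightarrow> subst enc dec chi C (Var\<circ>f) = subst enc dec chi C Var"
    by (rule subst_agree) (auto simp: f_def)
  have g: "good Ax Rl ((x,A)#\<Gamma>) ((y,A)#\<Gamma>) f"
    unfolding good_def
  proof (intro conjI ok\<Delta>, intro allI impI)
    fix u C assume uC: "(u, C) \<in> set ((x, A) # \<Gamma>)"
    show "(\<exists>C'. (f u, C') \<in> set ((y, A) # \<Gamma>) \<and> betaconv enc dec chi C' (subst enc dec chi C (Var \<circ> f))) \<and>
          (\<exists>s. typing enc dec chi Ax Rl ((y, A) # \<Gamma>) (subst enc dec chi C (Var \<circ> f)) (Const s))"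
    proof (cases "(u,C) = (x,A)")
      case True
      hence "u = x" "C = A" by auto
      thus ?thesis using agr[OF fvA] bc_alpha[OF alpha_iota] I by (auto simp: f_def)
    next
      case False
      hence uC': "(u,C) \<in> set \<Gamma>" using uC by auto
      hence ux: "u \<noteq> x" using x\<Gamma> by force
      have e: "subst enc dec chi C (Var\<circ>f) = subst enc dec chi C Var" using agr fvC uC' by blast
      show ?thesis unfolding e using I uC' ux bc_alpha[OF alpha_iota] by (auto simp: f_def)
    qed
  qed
  have "typing enc dec chi Ax Rl ((y,A)#\<Gamma>) (subst enc dec chi M (Var\<circ>f)) (subst enc dec chi B (Var\<circ>f))"
    using subst_typing(2)[OF assms(3)] g by blast
  thus ?thesis unfolding Vf usubst_def .
qed


end
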